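(* Let $p,q\in[1,\infty]$, let $\varphi_0,\varphi_1,\varphi$ be positive non-degenerate quasi-concave functions on $(0,\infty)$, let $\{\widetilde t_k\}_{k\in\mathbb Z}$ be a discretizing sequence for $\varphi(\varphi_0,\varphi_1)$ and $\{t_k\}_{k\in\mathbb Z}$ a discretizing sequence for $\varphi$. Then $$\left(l_q\Big(\frac1{\varphi_0(\widetilde t_k)}\Big),\,l_q\Big(\frac1{\varphi_1(\widetilde t_k)}\Big)\right)_{\varphi,p}=l_p\Big(l_q^{M_k}\Big(\frac1{\varphi(\varphi_0,\varphi_1)(\widetilde t_i)}\Big)\Big),$$ where $M_k=\{i:\ t_k\le \varphi_1(\widetilde t_i)/\varphi_0(\widetilde t_i)\le t_{k+1}\}$.
   Context: A function $\varphi:(0,\infty)\to(0,\infty)$ is non-degenerate quasi-concave if it is non-decreasing, $\varphi(t)/t$ is non-increasing, and $\lim_{t\to0+}\varphi(t)=\lim_{t\to\infty}\varphi(t)/t=\lim_{t\to0+}t/\varphi(t)=\lim_{t\to\infty}1/\varphi(t)=0$. $\varphi(\varphi_0,\varphi_1)(t)=\varphi_0(t)\varphi(\varphi_1(t)/\varphi_0(t))$. A positive sequence is strongly increasing if $\inf_k a_{k+1}/a_k\ge2$, strongly decreasing if $\sup_k a_{k+1}/a_k\le1/2$. A strongly increasing $\{s_k\}_{k\in\mathbb Z}$ is a discretizing sequence for a non-degenerate quasi-concave $\psi$ if $\{\psi(s_k)\}$ is strongly increasing, $\{\psi(s_k)/s_k\}$ is strongly decreasing, and $\mathbb Z=\mathbb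 Z_1\sqcup\mathbb Z_2$ with $\psi(s_{k+1})\le2\psi(s_k)$ for $k\in\mathbb Z_1$ and $\psi(s_k)/s_k\le2\psi(s_{k+1})/s_{k+1}$ for $k\in\mathbb Z_2$. For a Banach couple $\overline X$, $K(t,x;\overline X)=\inf_{x=x_0+x_1}(\|x_0\|_{X_0}+t\|x_1\|_{X_1})$, and $\overline X_{\varphi,p}$ is the space of $x\in X_0+X_1$ with $\big(\sum_k(K(t_k,x;\overline X)/\varphi(t_k))^p\big)^{1/p}<\infty$ (sup if $p=\infty$), where $\{t_k\}$ is the given discretizing sequence for $\varphi$. For a sequence space $E$ and positive weight $u$, $E(u)=\{a:\{a_iu_i\}\in E\}$ with norm $\|\{a_iu_i\}\|_E$; $l_p(l_q^{M_k})$ has norm $\big(\sum_k(\sum_{i\in M_k}|a_i|^q)^{p/q}\big)^{1/p}$ (usual modification for $\infty$). Sequences are indexed by $\mathbb Z$; equality means equal sets with equivalent norms. *)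

theory Defs
  imports "HOL-Analysis.Analysis"
begin

definition nd_quasi_concave :: "(real \<Rightarrow> real) \<Rightarrow> bool" where
  "nd_quasi_concave \<phi> \<longleftrightarrow>
     (\<forall>t>0. \<phi> t > 0) \<and>
     (\<forall>s t. 0 < s \<longrightarrow> s \<le> t \<longrightarrow> \<phi> s \<le> \<phi> t) \<and>
     (\<forall>s t. 0 < s \<longrightarrow> s \<le> t \<longrightarrow> \<phi> t / t \<le> \<phi> s / s) \<and>
     (\<phi> \<longlongrightarrow> 0) (at_right 0) \<and>
     ((\<lambda>t. \<phi> t / t) \<longlongrightarrow> 0) at_top \<and>
     ((\<lambda>t. t / \<phi> t) \<longlongrightarrow> 0) (at_right 0) \<and>
     ((\<lambda>t. 1 / \<phi> t) \<longlongrightarrow> 0) at_top"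

(* \<phi>(\<phi>0,\<phi>1)(t) = \<phi>0(t) \<phi>(\<phi>1(t)/\<phi>0(t)) *)
definition comp_qc :: "(real \<Rightarrow> real) \<Rightarrow> (real \<Rightarrow> real) \<Rightarrow> (real \<Rightarrow> real) \<Rightarrow> real \<Rightarrow> real" where
  "comp_qc \<phi> \<phi>0 \<phi>1 t = \<phi>0 t * \<phi> (\<phi>1 t / \<phi>0 t)"

definition strongly_increasing :: "(int \<Rightarrow> real) \<Rightarrow> bool" where
  "strongly_increasing a \<longleftrightarrow> (\<forall>k. a k > 0) \<and> (\<forall>k. a (k + 1) / a k \<ge> 2)"

definition strongly_decreasing :: "(int \<Rightarrow> real) \<Rightarrow> bool" where
  "strongly_decreasing a \<longleftrightarrow> (\<forall>k. a k > 0) \<and> (\<forall>k. a (k + 1) / a k \<le> 1 / 2)"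

definition discretizing_seq :: "(int \<Rightarrow> real) \<Rightarrow> (real \<Rightarrow> real) \<Rightarrow> bool" where
  "discretizing_seq s \<psi> \<longleftrightarrow>
     strongly_increasing s \<and>
     strongly_increasing (\<lambda>k. \<psi> (s k)) \<and>
     strongly_decreasing (\<lambda>k. \<psi> (s k) / s k) \<and>
     (\<exists>Z1 :: int set. \<forall>k.
        (k \<in> Z1 \<longrightarrow> \<psi> (s (k + 1)) \<le> 2 * \<psi> (s k)) \<and>
        (k \<notin> Z1 \<longrightarrow> \<psi> (s k) / s k \<le> 2 * (\<psi> (s (k + 1)) / s (k + 1))))"

definition seq_norm :: "ereal \<Rightarrow> (int \<Rightarrow> real) \<Rightarrow> ereal" where
  "seq_norm p a =
     (if p = \<infinity> then (SUP i. ereal \<bar>a i\<bar>)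
      else if (\<lambda>i. \<bar>a i\<bar> powr real_of_ereal p) summable_on UNIV
        then ereal ((\<Sum>\<^sub>\<infinity>i. \<bar>a i\<bar> powr real_of_ereal p) powr (1 / real_of_ereal p))
        else \<infinity>)"

definition weighted_lq_norm :: "ereal \<Rightarrow> (int \<Rightarrow> real) \<Rightarrow> (int \<Rightarrow> real) \<Rightarrow> ereal" where
  "weighted_lq_norm q u a = seq_norm q (\<lambda>i. a i * u i)"

definition mixed_norm :: "ereal \<Rightarrow> ereal \<Rightarrow> (int \<Rightarrow> int set) \<Rightarrow> (int \<Rightarrow> real) \<Rightarrow> (int \<Rightarrow> real) \<Rightarrow> ereal" where
  "mixed_norm p q M u a =
     (let inner = (\<lambda>k. seq_norm q (\<lambda>i. if i \<in> M k then a i * u i else 0))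
      in if (\<forall>k. inner k < \<infinity>) then seq_norm p (\<lambda>k. real_of_ereal (inner k)) else \<infinity>)"

(* A Banach couple of sequence spaces is given by two (extended) norms;
   the space is {x. N x < \<infinity>}. *)
definition in_sum_space :: "((int \<Rightarrow> real) \<Rightarrow> ereal) \<Rightarrow> ((int \<Rightarrow> real) \<Rightarrow> ereal) \<Rightarrow> (int \<Rightarrow> real) \<Rightarrow> bool" where
  "in_sum_space N0 N1 x \<longleftrightarrow> (\<exists>x0 x1. x = (\<lambda>i. x0 i + x1 i) \<and> N0 x0 < \<infinity> \<and> N1 x1 < \<infinity>)"

definition K_functional :: "((int \<Rightarrow> real) \<Rightarrow> ereal) \<Rightarrow> ((int \<Rightarrow> real) \<Rightarrow> ereal) \<Rightarrow> real \<Rightarrow> (int \<Rightarrow> real) \<Rightarrow> ereal" where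
  "K_functional N0 N1 t x =
     Inf {N0 x0 + ereal t * N1 x1 | x0 x1. x = (\<lambda>i. x0 i + x1 i) \<and> N0 x0 < \<infinity> \<and> N1 x1 < \<infinity>}"

definition interp_norm :: "((int \<Rightarrow> real) \<Rightarrow> ereal) \<Rightarrow> ((int \<Rightarrow> real) \<Rightarrow> ereal) \<Rightarrow> (real \<Rightarrow> real) \<Rightarrow> ereal \<Rightarrow> (int \<Rightarrow> real) \<Rightarrow> (int \<Rightarrow> real) \<Rightarrow> ereal" where
  "interp_norm N0 N1 \<phi> p t x =
     (if in_sum_space N0 N1 x
      then seq_norm p (\<lambda>k. real_of_ereal (K_functional N0 N1 (t k) x) / \<phi> (t k))
      else \<infinity>)"

definition equiv_spaces :: "((int \<Rightarrow> real) \<Rightarrow> ereal) \<Rightarrow> ((int \<Rightarrow> real) \<Rightarrow> ereal) \<Rightarrow> bool" where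
  "equiv_spaces N1 N2 \<longleftrightarrow>
     (\<forall>a. N1 a < \<infinity> \<longleftrightarrow> N2 a < \<infinity>) \<and>
     (\<exists>C::real. C > 0 \<and> (\<forall>a. N1 a < \<infinity> \<longrightarrow>
         N1 a \<le> ereal C * N2 a \<and> N2 a \<le> ereal C * N1 a))"

end

theory Submission
  imports Defs
begin


lemma real_summable_nn:
  fixes g :: "int \<Rightarrow> real"
  assumes "\<And>i. g i \<ge> 0"
  shows "g summable_on UNIV \<longleftrightarrow> (\<integral>\<^sup>+ i. ennreal (g i) \<partial>count_space UNIV) < \<infinity>"
proof -
  have "g summable_on UNIV \<longleftrightarrow> Infinite_Sum.abs_summable_on g UNIV"
    by (rule summable_on_iff_abs_summable_on_real)
  also have "\<dots> \<longleftrightarrow> Infinite_Set_Sum.abs_summable_on g UNIV"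
    by (rule abs_summable_equivalent)
  also have "\<dots> \<longleftrightarrow> integrable (count_space UNIV) g"
    by (simp add: Infinite_Set_Sum.abs_summable_on_def)
  also have "\<dots> \<longleftrightarrow> (\<integral>\<^sup>+ i. ennreal (g i) \<partial>count_space UNIV) < \<infinity>"
    using assms by (simp add: integrable_iff_bounded)
  finally show ?thesis .
qed

lemma real_infsum_nn:
  fixes g :: "int \<Rightarrow> real"
  assumes "\<And>i. g i \<ge> 0" "g summable_on UNIV"
  shows "ennreal (infsum g UNIV) = (\<integral>\<^sup>+ i. ennreal (g i) \<partial>count_space UNIV)"
proof -
  have a: "Infinite_Set_Sum.abs_summable_on g UNIV"
    using assms summable_on_iff_abs_summable_on_real abs_summable_equivalent by blast
  show ?thesis using nn_integral_conv_infsetsum[OF a] infsetsum_infsum[OF a] assms by simp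
qed



definition psum :: "real \<Rightarrow> (int \<Rightarrow> real) \<Rightarrow> ennreal" where
  "psum r f = (\<integral>\<^sup>+ i. ennreal (\<bar>f i\<bar> powr r) \<partial>count_space UNIV)"

lemma seq_norm_fin:
  assumes "r > 0"
  shows "seq_norm (ereal r) f = (if psum r f = \<infinity> then \<infinity> else ereal (enn2real (psum r f) powr (1/r)))"
proof -
  have nn: "\<And>i. \<bar>f i\<bar> powr r \<ge> 0" by simp
  show ?thesis
  proof (cases "psum r f = \<infinity>")
    case True
    then have "\<not> (\<lambda>i. \<bar>f i\<bar> powr r) summable_on UNIV"
      using real_summable_nn[OF nn] unfolding psum_def by simp
    then show ?thesis using True by (simp add: seq_norm_def)
  next
    case False
    then have s: "(\<lambda>i. \<bar>f i\<bar> powr r) summable_on UNIV"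
      using real_summable_nn[OF nn] unfolding psum_def by (simp add: top.not_eq_extremum)
    have "ennreal (infsum (\<lambda>i. \<bar>f i\<bar> powr r) UNIV) = psum r f"
      unfolding psum_def by (rule real_infsum_nn[OF nn s])
    moreover have "infsum (\<lambda>i. \<bar>f i\<bar> powr r) UNIV \<ge> 0" by (rule infsum_nonneg) simp
    ultimately have "infsum (\<lambda>i. \<bar>f i\<bar> powr r) UNIV = enn2real (psum r f)"
      by (metis enn2real_ennreal)
    then show ?thesis using s False by (simp add: seq_norm_def)
  qed
qed

lemma seq_norm_fin_le:
  assumes r: "r > 0" and C: "C > 0"
    and le: "psum r g \<le> ennreal (C powr r) * psum r f"
  shows "seq_norm (ereal r) g \<le> ereal C * seq_norm (ereal r) f"
proof (cases "psum r f = \<infinity>")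
  case True
  then show ?thesis using C by (simp add: seq_norm_fin[OF r])
next
  case False
  then obtain F where F: "psum r f = ennreal F" "F \<ge> 0"
    by (cases "psum r f") auto
  have "psum r g \<le> ennreal (C powr r * F)" using le F by (simp add: ennreal_mult)
  then obtain G where G: "psum r g = ennreal G" "G \<ge> 0" "G \<le> C powr r * F"
    using F(2) C by (cases "psum r g") (auto simp: ennreal_le_iff top_unique)
  have "G powr (1/r) \<le> (C powr r * F) powr (1/r)"
    using G r by (intro powr_mono2) auto
  also have "\<dots> = C * F powr (1/r)"
    using C F r by (simp add: powr_mult powr_powr)
  finally show ?thesis using F G by (simp add: seq_norm_fin[OF r])
qed



lemma single_le_nn_integral:
  fixes h :: "int \<Rightarrow> ennreal"
  shows "h k \<le> (\<integral>\<^sup>+ x. h x \<partial>count_space UNIV)"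
proof -
  have "h k = (\<integral>\<^sup>+ x. h x * indicator {k} x \<partial>count_space UNIV)" by simp
  also have "\<dots> \<le> (\<integral>\<^sup>+ x. h x \<partial>count_space UNIV)"
    by (intro nn_integral_mono) (auto simp: indicator_def)
  finally show ?thesis .
qed

lemma psum_mono:
  assumes "r > 0" "\<And>i. \<bar>f i\<bar> \<le> \<bar>g i\<bar>"
  shows "psum r f \<le> psum r g"
  unfolding psum_def using assms by (intro nn_integral_mono ennreal_leI powr_mono2) auto

lemma psum_scale:
  assumes "c \<ge> 0"
  shows "psum r (\<lambda>i. c * f i) = ennreal (c powr r) * psum r f"
proof -
  have "psum r (\<lambda>i. c * f i) = (\<integral>\<^sup>+ i. ennreal (c powr r) * ennreal (\<bar>f i\<bar> powr r) \<partial>count_space UNIV)"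
    unfolding psum_def using assms
    by (intro nn_integral_cong) (simp add: abs_mult powr_mult ennreal_mult)
  also have "\<dots> = ennreal (c powr r) * psum r f"
    unfolding psum_def by (simp add: nn_integral_cmult)
  finally show ?thesis .
qed

lemma ereal_ge1_cases:
  assumes "(1::ereal) \<le> p"
  obtains "p = \<infinity>" | r where "r \<ge> 1" "p = ereal r"
  using assms by (cases p) auto

lemma sn_nonneg:
  assumes "1 \<le> p" shows "0 \<le> seq_norm p f"
proof (cases rule: ereal_ge1_cases[OF assms])
  case 1
  then show ?thesis unfolding seq_norm_def
    by (simp add: order_trans[OF _ SUP_upper[of 0]])
next
  case (2 r)
  then show ?thesis by (simp add: seq_norm_fin)
qed

lemma sn_mono:
  assumes "1 \<le> p" "\<And>i. \<bar>f i\<bar> \<le> \<bar>g i\<bar>"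
  shows "seq_norm p f \<le> seq_norm p g"
proof (cases rule: ereal_ge1_cases[OF assms(1)])
  case 1
  then show ?thesis unfolding seq_norm_def using assms(2)
    by (simp add: SUP_mono')
next
  case (2 r)
  have "seq_norm (ereal r) f \<le> ereal 1 * seq_norm (ereal r) g"
    using 2 assms(2) by (intro seq_norm_fin_le) (auto intro: psum_mono)
  then show ?thesis using 2 by simp
qed

lemma sn_scale_le:
  assumes "1 \<le> p" "c > 0"
  shows "seq_norm p (\<lambda>i. c * f i) \<le> ereal c * seq_norm p f"
proof (cases rule: ereal_ge1_cases[OF assms(1)])
  case 1
  have "(SUP i. ereal \<bar>c * f i\<bar>) = (SUP i. ereal c * ereal \<bar>f i\<bar>)"
    using assms by (simp add: abs_mult)
  also have "\<dots> = ereal c * (SUP i. ereal \<bar>f i\<bar>)"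
    using assms by (intro SUP_ereal_mult_left) auto
  finally show ?thesis using 1 unfolding seq_norm_def by simp
next
  case (2 r)
  show ?thesis unfolding 2 using 2(1) assms(2)
    by (intro seq_norm_fin_le) (auto simp: psum_scale)
qed

lemma sn_scale:
  assumes "1 \<le> p" "c > 0"
  shows "seq_norm p (\<lambda>i. c * f i) = ereal c * seq_norm p f"
proof (rule antisym)
  show "seq_norm p (\<lambda>i. c * f i) \<le> ereal c * seq_norm p f" by (rule sn_scale_le[OF assms])
  have "seq_norm p f = seq_norm p (\<lambda>i. (1/c) * (c * f i))" using assms by simp
  also have "\<dots> \<le> ereal (1/c) * seq_norm p (\<lambda>i. c * f i)"
    using assms by (intro sn_scale_le) auto
  finally have "ereal c * seq_norm p f \<le> ereal c * (ereal (1/c) * seq_norm p (\<lambda>i. c * f i))"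
    using assms by (intro ereal_mult_left_mono) auto
  also have "\<dots> = (ereal c * ereal (1/c)) * seq_norm p (\<lambda>i. c * f i)"
    by (simp only: mult.assoc)
  also have "ereal c * ereal (1/c) = 1" using assms by simp
  finally show "ereal c * seq_norm p f \<le> seq_norm p (\<lambda>i. c * f i)" by simp
qed

lemma sn_point:
  assumes "1 \<le> p"
  shows "ereal \<bar>f i\<bar> \<le> seq_norm p f"
proof (cases rule: ereal_ge1_cases[OF assms(1)])
  case 1
  then show ?thesis unfolding seq_norm_def by (auto intro: SUP_upper)
next
  case (2 r)
  show ?thesis
  proof (cases "psum r f = \<infinity>")
    case True then show ?thesis using 2 by (simp add: seq_norm_fin)
  next
    case False
    have "ennreal (\<bar>f i\<bar> powr r) \<le> psum r f"
      unfolding psum_def by (rule single_le_nn_integral[where h="\<lambda>i. ennreal (\<bar>f i\<bar> powr r)"])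
    then have "\<bar>f i\<bar> powr r \<le> enn2real (psum r f)"
      using False by (cases "psum r f") (auto simp: ennreal_le_iff2)
    then have "(\<bar>f i\<bar> powr r) powr (1/r) \<le> enn2real (psum r f) powr (1/r)"
      using 2 by (intro powr_mono2) auto
    then show ?thesis using 2 False by (simp add: seq_norm_fin powr_powr)
  qed
qed

lemma sn_shift:
  assumes "1 \<le> p"
  shows "seq_norm p (\<lambda>k. f (k + m)) = seq_norm p f"
proof -
  have bij: "bij_betw (\<lambda>k::int. k + m) UNIV UNIV"
    by (rule bij_betwI[where g="\<lambda>k. k - m"]) auto
  have r: "range (\<lambda>k::int. k + m) = UNIV" using bij by (simp add: bij_betw_def)
  show ?thesis
  proof (cases rule: ereal_ge1_cases[OF assms(1)])
    case 1
    have "(SUP k. ereal \<bar>f (k + m)\<bar>) = (SUP k. ereal \<bar>f k\<bar>)"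
      by (metis image_image r)
    then show ?thesis using 1 unfolding seq_norm_def by simp
  next
    case (2 r)
    have "psum r (\<lambda>k. f (k + m)) = psum r f"
      unfolding psum_def using nn_integral_bij_count_space[OF bij, of "\<lambda>k. ennreal (\<bar>f k\<bar> powr r)"] by simp
    then show ?thesis using 2 by (simp add: seq_norm_fin)
  qed
qed



lemma sn_tri:
  assumes "1 \<le> p" "\<And>i. \<bar>h i\<bar> \<le> \<bar>f i\<bar> + \<bar>g i\<bar>"
  shows "seq_norm p h \<le> 4 * (seq_norm p f + seq_norm p g)"
proof (cases rule: ereal_ge1_cases[OF assms(1)])
  case 1
  have nf: "0 \<le> seq_norm p f" "0 \<le> seq_norm p g" using sn_nonneg[OF assms(1)] by auto
  have "seq_norm p h \<le> seq_norm p f + seq_norm p g"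
    unfolding 1 seq_norm_def
  proof (simp, rule SUP_least)
    fix i
    have "ereal \<bar>h i\<bar> \<le> ereal \<bar>f i\<bar> + ereal \<bar>g i\<bar>" using assms(2) by simp
    also have "\<dots> \<le> (SUP i. ereal \<bar>f i\<bar>) + (SUP i. ereal \<bar>g i\<bar>)"
      by (intro add_mono SUP_upper) auto
    finally show "ereal \<bar>h i\<bar> \<le> (SUP i. ereal \<bar>f i\<bar>) + (SUP i. ereal \<bar>g i\<bar>)" .
  qed
  also have "\<dots> \<le> 4 * (seq_norm p f + seq_norm p g)"
  proof -
    have x: "0 \<le> seq_norm p f + seq_norm p g" using nf by simp
    have "1 * (seq_norm p f + seq_norm p g) \<le> 4 * (seq_norm p f + seq_norm p g)"
      by (rule ereal_mult_right_mono[OF _ x]) simp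
    then show ?thesis by simp
  qed
  finally show ?thesis .
next
  case (2 r)
  have r0: "r > 0" using 2 by simp
  have pt: "\<bar>h i\<bar> powr r \<le> 2 powr r * (\<bar>f i\<bar> powr r + \<bar>g i\<bar> powr r)" for i
  proof -
    define m where "m = max \<bar>f i\<bar> \<bar>g i\<bar>"
    have "\<bar>h i\<bar> \<le> 2 * m" using assms(2)[of i] unfolding m_def by linarith
    then have "\<bar>h i\<bar> powr r \<le> (2 * m) powr r" using r0 by (intro powr_mono2) auto
    also have "\<dots> = 2 powr r * m powr r" unfolding m_def by (simp add: powr_mult)
    also have "m powr r \<le> \<bar>f i\<bar> powr r + \<bar>g i\<bar> powr r" unfolding m_def by (simp add: max_def)
    finally show ?thesis by simp
  qed
  have ph: "psum r h \<le> ennreal (2 powr r) * (psum r f + psum r g)"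
  proof -
    have "psum r h \<le> (\<integral>\<^sup>+ i. ennreal (2 powr r) * (ennreal (\<bar>f i\<bar> powr r) + ennreal (\<bar>g i\<bar> powr r)) \<partial>count_space UNIV)"
      unfolding psum_def using pt
      by (intro nn_integral_mono) (simp add: ennreal_mult[symmetric] ennreal_plus[symmetric] del: ennreal_plus)
    also have "\<dots> = ennreal (2 powr r) * (psum r f + psum r g)"
      unfolding psum_def by (simp add: nn_integral_cmult nn_integral_add)
    finally show ?thesis .
  qed
  show ?thesis
  proof (cases "psum r f = \<infinity> \<or> psum r g = \<infinity>")
    case True
    then have "seq_norm p f = \<infinity> \<or> seq_norm p g = \<infinity>" using 2 by (auto simp: seq_norm_fin)
    then show ?thesis using sn_nonneg[OF assms(1), of f] sn_nonneg[OF assms(1), of g] by auto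
  next
    case False
    obtain F where F: "psum r f = ennreal F" "F \<ge> 0"
      using False by (cases "psum r f") auto
    obtain G where G: "psum r g = ennreal G" "G \<ge> 0"
      using False by (cases "psum r g") auto
    note FG = F G
    have "psum r h \<le> ennreal (2 powr r * (F + G))" using ph FG by (simp add: ennreal_mult ennreal_plus[symmetric] del: ennreal_plus)
    then obtain H where H: "psum r h = ennreal H" "H \<ge> 0" "H \<le> 2 powr r * (F + G)"
      using FG by (cases "psum r h") (auto simp: ennreal_le_iff top_unique)
    define M where "M = max F G"
    have "F + G \<le> 2 * M" unfolding M_def by linarith
    then have "H \<le> 2 powr r * (2 * M)" using H(3)
      by (meson order_trans mult_left_mono powr_ge_zero)
    then have "H powr (1/r) \<le> (2 powr r * (2 * M)) powr (1/r)"
      using H FG r0 by (intro powr_mono2) auto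
    also have "\<dots> = 2 * (2 powr (1/r) * M powr (1/r))"
      using FG r0 unfolding M_def by (simp add: powr_mult powr_powr)
    also have "\<dots> \<le> 2 * (2 * M powr (1/r))"
    proof -
      have "2 powr (1/r) \<le> 2 powr 1" using 2 by (intro powr_mono) auto
      then show ?thesis by (intro mult_left_mono mult_right_mono) auto
    qed
    also have "M powr (1/r) \<le> F powr (1/r) + G powr (1/r)" unfolding M_def by (simp add: max_def)
    finally have "H powr (1/r) \<le> 4 * (F powr (1/r) + G powr (1/r))" by simp
    then show ?thesis using FG H 2 r0 by (simp add: seq_norm_fin)
  qed
qed



lemma geo_nat:
  assumes "0 < \<tau>" "\<tau> < (1::real)"
  shows "(\<integral>\<^sup>+ n. ennreal (\<tau> ^ n) \<partial>count_space (UNIV::nat set)) = ennreal (1/(1-\<tau>))"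
proof -
  have "(\<integral>\<^sup>+ n. ennreal (\<tau> ^ n) \<partial>count_space (UNIV::nat set)) = (\<Sum>n. ennreal (\<tau> ^ n))"
    by (rule nn_integral_count_space_nat)
  also have "\<dots> = ennreal (\<Sum>n. \<tau> ^ n)"
    using assms by (intro suminf_ennreal2 summable_geometric) auto
  also have "\<dots> = ennreal (1/(1-\<tau>))" using assms by (simp add: suminf_geometric)
  finally show ?thesis .
qed

lemma geo_int:
  assumes "0 < \<tau>" "\<tau> < (1::real)"
  shows "(\<integral>\<^sup>+ m. ennreal (\<tau> ^ nat \<bar>m\<bar>) \<partial>count_space (UNIV::int set)) \<le> ennreal (2/(1-\<tau>))"
proof -
  let ?f = "\<lambda>m::int. ennreal (\<tau> ^ nat \<bar>m\<bar>)"
  have b1: "bij_betw int UNIV {0..}"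
    by (rule bij_betwI[where g=nat]) auto
  have b2: "bij_betw (\<lambda>n. - int n) UNIV {..0}"
    by (rule bij_betwI[where g="\<lambda>m. nat (-m)"]) auto
  have "(\<integral>\<^sup>+ m. ?f m \<partial>count_space UNIV) \<le>
        (\<integral>\<^sup>+ m. ?f m * indicator {0..} m + ?f m * indicator {..0} m \<partial>count_space UNIV)"
    by (intro nn_integral_mono) (auto simp: indicator_def)
  also have "\<dots> = (\<integral>\<^sup>+ m. ?f m \<partial>count_space {0..}) + (\<integral>\<^sup>+ m. ?f m \<partial>count_space {..0})"
    by (simp add: nn_integral_add nn_integral_count_space_indicator)
  also have "(\<integral>\<^sup>+ m. ?f m \<partial>count_space {0..}) = (\<integral>\<^sup>+ n. ?f (int n) \<partial>count_space UNIV)"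
    by (rule nn_integral_bij_count_space[OF b1, symmetric])
  also have "\<dots> = ennreal (1/(1-\<tau>))" using geo_nat[OF assms] by simp
  also have "(\<integral>\<^sup>+ m. ?f m \<partial>count_space {..0}) = (\<integral>\<^sup>+ n. ?f (- int n) \<partial>count_space UNIV)"
    by (rule nn_integral_bij_count_space[OF b2, symmetric])
  also have "\<dots> = ennreal (1/(1-\<tau>))" using geo_nat[OF assms] by simp
  finally show ?thesis using assms by (simp add: ennreal_plus[symmetric] del: ennreal_plus)
qed

lemma geo_int_shift:
  assumes "0 < \<tau>" "\<tau> < (1::real)"
  shows "(\<integral>\<^sup>+ k. ennreal (\<tau> ^ nat \<bar>j - k\<bar>) \<partial>count_space (UNIV::int set)) \<le> ennreal (2/(1-\<tau>))"
proof -
  have b: "bij_betw (\<lambda>k::int. j - k) UNIV UNIV"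
    by (rule bij_betwI[where g="\<lambda>k. j - k"]) auto
  have "(\<integral>\<^sup>+ k. ennreal (\<tau> ^ nat \<bar>j - k\<bar>) \<partial>count_space (UNIV::int set)) =
        (\<integral>\<^sup>+ m. ennreal (\<tau> ^ nat \<bar>m\<bar>) \<partial>count_space (UNIV::int set))"
    by (rule nn_integral_bij_count_space[OF b, of "\<lambda>m. ennreal (\<tau> ^ nat \<bar>m\<bar>)"])
  then show ?thesis using geo_int[OF assms] by simp
qed

lemma nn_swap_int:
  fixes f :: "int \<Rightarrow> int \<Rightarrow> ennreal"
  shows "(\<integral>\<^sup>+ x. \<integral>\<^sup>+ y. f x y \<partial>count_space UNIV \<partial>count_space UNIV) =
         (\<integral>\<^sup>+ y. \<integral>\<^sup>+ x. f x y \<partial>count_space UNIV \<partial>count_space UNIV)"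
  by (rule nn_integral_count_space_nn_integral) auto

lemma regroup:
  fixes w h :: "int \<Rightarrow> ennreal" and kk :: "int \<Rightarrow> int"
  shows "(\<integral>\<^sup>+ i. w (kk i) * h i \<partial>count_space UNIV) =
         (\<integral>\<^sup>+ k. w k * (\<integral>\<^sup>+ i. (if kk i = k then h i else 0) \<partial>count_space UNIV) \<partial>count_space UNIV)"
proof -
  have "(\<integral>\<^sup>+ k. w k * (\<integral>\<^sup>+ i. (if kk i = k then h i else 0) \<partial>count_space UNIV) \<partial>count_space UNIV)
      = (\<integral>\<^sup>+ k. \<integral>\<^sup>+ i. w k * h i * indicator {kk i} k \<partial>count_space UNIV \<partial>count_space UNIV)"
    by (intro nn_integral_cong) (auto simp: nn_integral_cmult[symmetric] indicator_def intro!: nn_integral_cong)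
  also have "\<dots> = (\<integral>\<^sup>+ i. \<integral>\<^sup>+ k. w k * h i * indicator {kk i} k \<partial>count_space UNIV \<partial>count_space UNIV)"
    by (rule nn_swap_int)
  also have "\<dots> = (\<integral>\<^sup>+ i. w (kk i) * h i \<partial>count_space UNIV)"
    by (intro nn_integral_cong) simp
  finally show ?thesis by simp
qed



lemma ereal_le_C_mult:
  assumes "0 \<le> (x::ereal)" "1 \<le> C"
  shows "x \<le> ereal C * x"
proof -
  have "1 * x \<le> ereal C * x" by (rule ereal_mult_right_mono) (use assms in auto)
  then show ?thesis by simp
qed

lemma pow_r_le:
  fixes r t x :: real
  assumes "r \<ge> 1" "t \<ge> 0" "x \<ge> 0" "x powr r \<le> t"
  shows "x \<le> t powr (1/r)"
proof -
  have "(x powr r) powr (1/r) \<le> t powr (1/r)" using assms by (intro powr_mono2) auto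
  then show ?thesis using assms by (simp add: powr_powr)
qed

lemma conv_outer:
  assumes p: "1 \<le> p" and s: "0 < \<sigma>" "\<sigma> < 1" and B: "\<And>k. B k \<ge> 0" and D: "\<And>j. D j \<ge> 0"
    and le: "\<And>j. ereal (D j) \<le> (SUP k. ereal (\<sigma> ^ nat \<bar>j-k\<bar> * B k))"
  shows "seq_norm p D \<le> ereal (2/(1-\<sigma>)) * seq_norm p B"
proof -
  have C1: "1 \<le> 2/(1-\<sigma>)" using s by (simp add: field_simps)
  have spow: "\<sigma> ^ n \<le> 1" "0 < \<sigma> ^ n" for n using s by (auto intro: power_le_one)
  show ?thesis
  proof (cases rule: ereal_ge1_cases[OF p])
    case 1
    have "seq_norm p D \<le> seq_norm p B"
      unfolding 1 seq_norm_def
    proof (simp, rule SUP_least)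
      fix j
      have "ereal \<bar>D j\<bar> \<le> (SUP k. ereal (\<sigma> ^ nat \<bar>j-k\<bar> * B k))" using le D by simp
      also have "\<dots> \<le> (SUP k. ereal \<bar>B k\<bar>)"
      proof (intro SUP_mono')
        fix k
        have "\<sigma> ^ nat \<bar>j-k\<bar> * B k \<le> B k"
          by (metis B spow mult_left_le_one_le less_imp_le)
        then show "ereal (\<sigma> ^ nat \<bar>j-k\<bar> * B k) \<le> ereal \<bar>B k\<bar>" using B by simp
      qed
      finally show "ereal \<bar>D j\<bar> \<le> (SUP k. ereal \<bar>B k\<bar>)" .
    qed
    also have "\<dots> \<le> ereal (2/(1-\<sigma>)) * seq_norm p B"
      by (rule ereal_le_C_mult[OF sn_nonneg[OF p] C1])
    finally show ?thesis .
  next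
    case (2 r)
    let ?Cg = "2/(1-\<sigma>)"
    have pt: "ennreal (\<bar>D j\<bar> powr r) \<le> (\<integral>\<^sup>+ k. ennreal (\<sigma> ^ nat \<bar>j-k\<bar>) * ennreal (\<bar>B k\<bar> powr r) \<partial>count_space UNIV)"
      (is "_ \<le> ?T") for j
    proof (cases "?T = \<infinity>")
      case True then show ?thesis by simp
    next
      case False
      then obtain t where t: "?T = ennreal t" "t \<ge> 0" by (cases ?T) auto
      have "ereal (\<sigma> ^ nat \<bar>j-k\<bar> * B k) \<le> ereal (t powr (1/r))" for k
      proof -
        have "(\<sigma> ^ nat \<bar>j-k\<bar> * B k) powr r = (\<sigma> ^ nat \<bar>j-k\<bar>) powr r * B k powr r"
          using B spow by (simp add: powr_mult)
        also have "\<dots> \<le> \<sigma> ^ nat \<bar>j-k\<bar> * B k powr r"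
          using spow[of "nat \<bar>j-k\<bar>"] 2 by (intro mult_right_mono powr_le_one_le) auto
        finally have a: "(\<sigma> ^ nat \<bar>j-k\<bar> * B k) powr r \<le> \<sigma> ^ nat \<bar>j-k\<bar> * B k powr r" .
        have "ennreal (\<sigma> ^ nat \<bar>j-k\<bar>) * ennreal (\<bar>B k\<bar> powr r) \<le> ?T"
          by (rule single_le_nn_integral[where h="\<lambda>k. ennreal (\<sigma> ^ nat \<bar>j-k\<bar>) * ennreal (\<bar>B k\<bar> powr r)"])
        moreover have "ennreal (\<sigma> ^ nat \<bar>j-k\<bar> * B k powr r) = ennreal (\<sigma> ^ nat \<bar>j-k\<bar>) * ennreal (\<bar>B k\<bar> powr r)"
          using B spow[of "nat \<bar>j-k\<bar>"] by (simp add: ennreal_mult)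
        ultimately have "ennreal (\<sigma> ^ nat \<bar>j-k\<bar> * B k powr r) \<le> ennreal t" using t(1) by simp
        then have "\<sigma> ^ nat \<bar>j-k\<bar> * B k powr r \<le> t"
          using t by (simp add: ennreal_le_iff)
        then have "(\<sigma> ^ nat \<bar>j-k\<bar> * B k) powr r \<le> t" using a by linarith
        then have "\<sigma> ^ nat \<bar>j-k\<bar> * B k \<le> t powr (1/r)"
          using 2 t B spow[of "nat \<bar>j-k\<bar>"] by (intro pow_r_le) auto
        then show ?thesis by simp
      qed
      then have "ereal (D j) \<le> ereal (t powr (1/r))"
        using le[of j] by (meson SUP_least order_trans)
      then have "D j \<le> t powr (1/r)" by simp
      then have "D j powr r \<le> (t powr (1/r)) powr r" using D 2 by (intro powr_mono2) auto
      then show ?thesis using t D 2 by (simp add: powr_powr)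
    qed
    have "psum r D \<le> (\<integral>\<^sup>+ j. \<integral>\<^sup>+ k. ennreal (\<sigma> ^ nat \<bar>j-k\<bar>) * ennreal (\<bar>B k\<bar> powr r) \<partial>count_space UNIV \<partial>count_space UNIV)"
      unfolding psum_def by (intro nn_integral_mono pt)
    also have "\<dots> = (\<integral>\<^sup>+ k. \<integral>\<^sup>+ j. ennreal (\<sigma> ^ nat \<bar>j-k\<bar>) * ennreal (\<bar>B k\<bar> powr r) \<partial>count_space UNIV \<partial>count_space UNIV)"
      by (rule nn_swap_int)
    also have "\<dots> = (\<integral>\<^sup>+ k. ennreal (\<bar>B k\<bar> powr r) * (\<integral>\<^sup>+ j. ennreal (\<sigma> ^ nat \<bar>k-j\<bar>) \<partial>count_space UNIV) \<partial>count_space UNIV)"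
      by (intro nn_integral_cong) (simp add: nn_integral_cmult[symmetric] abs_minus_commute mult.commute)
    also have "\<dots> \<le> (\<integral>\<^sup>+ k. ennreal (\<bar>B k\<bar> powr r) * ennreal ?Cg \<partial>count_space UNIV)"
      by (intro nn_integral_mono mult_left_mono geo_int_shift s) auto
    also have "\<dots> = ennreal ?Cg * psum r B"
      unfolding psum_def by (simp add: nn_integral_multc mult.commute)
    also have "\<dots> \<le> ennreal (?Cg powr r) * psum r B"
    proof -
      have "?Cg powr 1 \<le> ?Cg powr r" using C1 2 by (intro powr_mono) auto
      then show ?thesis using C1 s by (intro mult_right_mono ennreal_leI) auto
    qed
    finally show ?thesis unfolding 2 using 2 C1 s by (intro seq_norm_fin_le) auto
  qed
qed



lemma conv_inner:
  assumes q: "1 \<le> q" and s: "0 < \<sigma>" "\<sigma> \<le> 1" and t: "0 < \<tau>" "\<tau> < 1" and c: "\<And>i. c i \<ge> 0"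
  shows "seq_norm q (\<lambda>i. (\<sigma>*\<tau>) ^ nat \<bar>j - kk i\<bar> * c i)
     \<le> ereal (2/(1-\<tau>)) * (SUP k. ereal (\<sigma> ^ nat \<bar>j-k\<bar>) * seq_norm q (\<lambda>i. if kk i = k then c i else 0))"
    (is "_ \<le> ereal ?Cg * ?S")
proof -
  let ?Bk = "\<lambda>k. seq_norm q (\<lambda>i. if kk i = k then c i else 0)"
  have C1: "1 \<le> ?Cg" using t by (simp add: field_simps)
  have spow: "\<sigma> ^ n \<le> 1" "0 < \<sigma> ^ n" for n using s by (auto intro: power_le_one)
  have tpow: "\<tau> ^ n \<le> 1" "0 < \<tau> ^ n" for n using t by (auto intro: power_le_one)
  have Snn: "0 \<le> ?S"
  proof -
    have "0 \<le> ereal (\<sigma> ^ nat \<bar>j-0\<bar>) * ?Bk 0"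
      using sn_nonneg[OF q] spow[of "nat \<bar>j\<bar>"] by (intro ereal_0_le_mult) (auto simp: less_imp_le)
    also have "\<dots> \<le> ?S" by (rule SUP_upper) simp
    finally show ?thesis .
  qed
  show ?thesis
  proof (cases rule: ereal_ge1_cases[OF q])
    case 1
    have eq: "seq_norm q (\<lambda>i. (\<sigma>*\<tau>) ^ nat \<bar>j - kk i\<bar> * c i) = (SUP i. ereal \<bar>(\<sigma>*\<tau>) ^ nat \<bar>j - kk i\<bar> * c i\<bar>)"
      unfolding 1 seq_norm_def by simp
    have "seq_norm q (\<lambda>i. (\<sigma>*\<tau>) ^ nat \<bar>j - kk i\<bar> * c i) \<le> ?S"
      unfolding eq
    proof (rule SUP_least)
      fix i
      have "\<bar>(\<sigma>*\<tau>) ^ nat \<bar>j - kk i\<bar> * c i\<bar> \<le> \<sigma> ^ nat \<bar>j - kk i\<bar> * c i"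
        using c[of i] spow[of "nat \<bar>j - kk i\<bar>"] tpow[of "nat \<bar>j - kk i\<bar>"]
        by (simp add: power_mult_distrib abs_mult mult_left_le_one_le mult.assoc mult.left_commute[of "\<tau> ^ _"]
            mult_le_cancel_left1 mult_left_mono)
      then have "ereal \<bar>(\<sigma>*\<tau>) ^ nat \<bar>j - kk i\<bar> * c i\<bar> \<le> ereal (\<sigma> ^ nat \<bar>j - kk i\<bar>) * ereal \<bar>c i\<bar>"
        using c by simp
      also have "\<dots> \<le> ereal (\<sigma> ^ nat \<bar>j - kk i\<bar>) * ?Bk (kk i)"
        using sn_point[OF q, of "\<lambda>i'. if kk i' = kk i then c i' else 0" i] spow
        by (intro ereal_mult_left_mono) (auto simp: less_imp_le)
      also have "\<dots> \<le> ?S" by (rule SUP_upper) simp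
      finally show "ereal \<bar>(\<sigma>*\<tau>) ^ nat \<bar>j - kk i\<bar> * c i\<bar> \<le> ?S" .
    qed
    also have "\<dots> \<le> ereal ?Cg * ?S" by (rule ereal_le_C_mult[OF Snn C1])
    finally show ?thesis .
  next
    case (2 r)
    show ?thesis
    proof (cases "?S = \<infinity>")
      case True then show ?thesis using C1 t by simp
    next
      case False
      then obtain sv where sv: "?S = ereal sv" "sv \<ge> 0" using Snn by (cases ?S) auto
      have bk: "ennreal ((\<sigma> ^ nat \<bar>j-k\<bar>) powr r) * psum r (\<lambda>i. if kk i = k then c i else 0) \<le> ennreal (sv powr r)" for k
      proof -
        have le: "ereal (\<sigma> ^ nat \<bar>j-k\<bar>) * ?Bk k \<le> ereal sv"
          using sv(1) by (metis (mono_tags, lifting) SUP_upper UNIV_I)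
        show ?thesis
        proof (cases "psum r (\<lambda>i. if kk i = k then c i else 0) = \<infinity>")
          case True
          then have "?Bk k = \<infinity>" using 2 by (simp add: seq_norm_fin)
          then show ?thesis using le spow[of "nat \<bar>j-k\<bar>"] s by simp
        next
          case False
          then obtain P where P: "psum r (\<lambda>i. if kk i = k then c i else 0) = ennreal P" "P \<ge> 0"
            by (cases "psum r (\<lambda>i. if kk i = k then c i else 0)") auto
          have "\<sigma> ^ nat \<bar>j-k\<bar> * P powr (1/r) \<le> sv" using le P 2 by (simp add: seq_norm_fin)
          then have "(\<sigma> ^ nat \<bar>j-k\<bar> * P powr (1/r)) powr r \<le> sv powr r"
            using spow[of "nat \<bar>j-k\<bar>"] P 2 by (intro powr_mono2) auto
          then have "(\<sigma> ^ nat \<bar>j-k\<bar>) powr r * P \<le> sv powr r"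
            using spow[of "nat \<bar>j-k\<bar>"] P 2 by (simp add: powr_mult powr_powr)
          then show ?thesis using P by (simp add: ennreal_mult[symmetric] ennreal_leI)
        qed
      qed
      let ?w = "\<lambda>k. ennreal (((\<sigma>*\<tau>) ^ nat \<bar>j-k\<bar>) powr r)"
      let ?h = "\<lambda>i. ennreal (\<bar>c i\<bar> powr r)"
      have "psum r (\<lambda>i. (\<sigma>*\<tau>) ^ nat \<bar>j - kk i\<bar> * c i) = (\<integral>\<^sup>+ i. ?w (kk i) * ?h i \<partial>count_space UNIV)"
        unfolding psum_def using s t
        by (intro nn_integral_cong) (simp add: abs_mult powr_mult ennreal_mult)
      also have "\<dots> = (\<integral>\<^sup>+ k. ?w k * (\<integral>\<^sup>+ i. (if kk i = k then ?h i else 0) \<partial>count_space UNIV) \<partial>count_space UNIV)"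
        by (rule regroup)
      also have "\<dots> = (\<integral>\<^sup>+ k. ?w k * psum r (\<lambda>i. if kk i = k then c i else 0) \<partial>count_space UNIV)"
        unfolding psum_def
        by (intro nn_integral_cong arg_cong2[where f="(*)"] refl) auto
      also have "\<dots> \<le> (\<integral>\<^sup>+ k. ennreal (\<tau> ^ nat \<bar>j-k\<bar>) * ennreal (sv powr r) \<partial>count_space UNIV)"
      proof (intro nn_integral_mono)
        fix k
        have "?w k = ennreal ((\<tau> ^ nat \<bar>j-k\<bar>) powr r) * ennreal ((\<sigma> ^ nat \<bar>j-k\<bar>) powr r)"
          using s t by (simp add: power_mult_distrib powr_mult ennreal_mult mult.commute)
        moreover have "ennreal ((\<tau> ^ nat \<bar>j-k\<bar>) powr r) \<le> ennreal (\<tau> ^ nat \<bar>j-k\<bar>)"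
          using tpow[of "nat \<bar>j-k\<bar>"] 2 by (intro ennreal_leI powr_le_one_le) auto
        ultimately show "?w k * psum r (\<lambda>i. if kk i = k then c i else 0) \<le> ennreal (\<tau> ^ nat \<bar>j-k\<bar>) * ennreal (sv powr r)"
          using bk[of k] by (simp add: mult.assoc) (meson mult_mono order_trans zero_le)
      qed
      also have "\<dots> = (\<integral>\<^sup>+ k. ennreal (\<tau> ^ nat \<bar>j-k\<bar>) \<partial>count_space UNIV) * ennreal (sv powr r)"
        by (simp add: nn_integral_multc)
      also have "\<dots> \<le> ennreal ?Cg * ennreal (sv powr r)"
        by (intro mult_right_mono geo_int_shift t) auto
      also have "\<dots> = ennreal (?Cg * sv powr r)" using C1 t by (subst ennreal_mult) auto
      finally have pg: "psum r (\<lambda>i. (\<sigma>*\<tau>) ^ nat \<bar>j - kk i\<bar> * c i) \<le> ennreal (?Cg * sv powr r)" .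
      then obtain G where G: "psum r (\<lambda>i. (\<sigma>*\<tau>) ^ nat \<bar>j - kk i\<bar> * c i) = ennreal G" "G \<ge> 0" "G \<le> ?Cg * sv powr r"
        using C1 t sv by (cases "psum r (\<lambda>i. (\<sigma>*\<tau>) ^ nat \<bar>j - kk i\<bar> * c i)") (auto simp: ennreal_le_iff top_unique)
      have "G powr (1/r) \<le> (?Cg * sv powr r) powr (1/r)" using G 2 by (intro powr_mono2) auto
      also have "\<dots> = ?Cg powr (1/r) * sv"
      proof -
        have e1: "(?Cg * sv powr r) powr (1/r) = ?Cg powr (1/r) * (sv powr r) powr (1/r)"
          using C1 sv by (intro powr_mult; auto)
        have e2: "(sv powr r) powr (1/r) = sv" using sv 2 by (simp add: powr_powr)
        show ?thesis by (simp only: e1 e2)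
      qed
      also have "\<dots> \<le> ?Cg * sv"
      proof -
        have "?Cg powr (1/r) \<le> ?Cg powr 1" using C1 2 by (intro powr_mono) auto
        then show ?thesis using C1 sv t by (intro mult_right_mono) auto
      qed
      finally show ?thesis using G sv 2 by (simp add: seq_norm_fin)
    qed
  qed
qed



lemma si_pos: "strongly_increasing a \<Longrightarrow> a k > 0"
  unfolding strongly_increasing_def by auto

lemma si_step: assumes "strongly_increasing a" shows "a (k+1) \<ge> 2 * a k"
proof -
  have "a (k+1) / a k \<ge> 2" "a k > 0" using assms unfolding strongly_increasing_def by auto
  then show ?thesis by (simp add: field_simps)
qed

lemma sd_step: assumes "strongly_decreasing a" shows "a (k+1) \<le> a k / 2"
proof -
  have "a (k+1) / a k \<le> 1/2" "a k > 0" using assms unfolding strongly_decreasing_def by auto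
  then show ?thesis by (simp add: field_simps)
qed

lemma si_geo: assumes "strongly_increasing a" shows "a (k + int n) \<ge> 2 ^ n * a k"
proof (induction n)
  case 0 then show ?case by simp
next
  case (Suc n)
  have "2 ^ Suc n * a k = 2 * (2 ^ n * a k)" by simp
  also have "\<dots> \<le> 2 * a (k + int n)" using Suc by simp
  also have "\<dots> \<le> a (k + int n + 1)" by (rule si_step[OF assms])
  finally show ?case by (simp add: ac_simps)
qed

lemma sd_geo: assumes "strongly_decreasing a" shows "a (k + int n) \<le> (1/2) ^ n * a k"
proof (induction n)
  case 0 then show ?case by simp
next
  case (Suc n)
  have "a (k + int (Suc n)) = a (k + int n + 1)" by (simp add: ac_simps)
  also have "\<dots> \<le> a (k + int n) / 2" by (rule sd_step[OF assms])
  also have "\<dots> \<le> ((1/2) ^ n * a k) / 2" using Suc by simp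
  finally show ?case by simp
qed

lemma si_mono: fixes j k :: int assumes "strongly_increasing a" "j \<le> k" shows "a j \<le> a k"
proof -
  obtain n :: nat where n: "k = j + int n" using assms(2) by (metis zle_iff_zadd)
  have "a j \<le> 2 ^ n * a j" using si_pos[OF assms(1), of j] by simp
  also have "\<dots> \<le> a k" using si_geo[OF assms(1), where k=j and n=n] n by simp
  finally show ?thesis .
qed

lemma si_block:
  assumes si: "strongly_increasing a" and u: "u > 0"
  shows "\<exists>k. a k \<le> u \<and> u < a (k+1)"
proof -
  have a0: "a 0 > 0" by (rule si_pos[OF si])
  obtain n :: nat where n1: "u / a 0 < 2 ^ n" using real_arch_pow[of 2 "u / a 0"] by auto
  have big: "a k > u" if "k \<ge> int n" for k
  proof -
    have "u < 2 ^ n * a 0" using n1 a0 by (simp add: field_simps)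
    also have "\<dots> \<le> a (0 + int n)" by (rule si_geo[OF si])
    also have "\<dots> \<le> a k" using that by (intro si_mono[OF si]) auto
    finally show ?thesis .
  qed
  obtain m :: nat where m1: "a 0 / u < 2 ^ m" using real_arch_pow[of 2 "a 0 / u"] by auto
  have small: "a (- int m) \<le> u"
  proof -
    have "2 ^ m * a (- int m) \<le> a (- int m + int m)" by (rule si_geo[OF si])
    then have "2 ^ m * a (- int m) \<le> a 0" by simp
    moreover have "a 0 < 2 ^ m * u" using m1 u by (simp add: field_simps)
    ultimately have "2 ^ m * a (- int m) \<le> 2 ^ m * u" by linarith
    then show ?thesis by simp
  qed
  have main: "\<And>k. a k \<le> u \<Longrightarrow> k + int N \<ge> int n \<Longrightarrow> \<exists>k'. a k' \<le> u \<and> u < a (k'+1)" for N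
  proof (induction N)
    case 0 then show ?case using big by force
  next
    case (Suc N)
    show ?case
    proof (cases "u < a (k+1)")
      case True then show ?thesis using Suc.prems by blast
    next
      case False
      then show ?thesis using Suc.IH[of "k+1"] Suc.prems by auto
    qed
  qed
  show ?thesis by (rule main[OF small, of "nat (int n + int m)"]) auto
qed



lemma ndq_pos: "nd_quasi_concave \<phi> \<Longrightarrow> x > 0 \<Longrightarrow> \<phi> x > 0"
  unfolding nd_quasi_concave_def by auto
lemma ndq_mono: "nd_quasi_concave \<phi> \<Longrightarrow> 0 < s \<Longrightarrow> s \<le> x \<Longrightarrow> \<phi> s \<le> \<phi> x"
  unfolding nd_quasi_concave_def by auto
lemma ndq_anti: "nd_quasi_concave \<phi> \<Longrightarrow> 0 < s \<Longrightarrow> s \<le> x \<Longrightarrow> \<phi> x / x \<le> \<phi> s / s"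
  unfolding nd_quasi_concave_def by auto

lemma ptU:
  assumes nd: "nd_quasi_concave \<phi>" and ds: "discretizing_seq t \<phi>"
    and u: "t k \<le> u" "u \<le> t (k+1)"
  shows "min 1 (t j / u) / \<phi> (t j) \<le> 2 * (1/2) ^ nat \<bar>j - k\<bar> / \<phi> u"
proof -
  have si: "strongly_increasing t" and sip: "strongly_increasing (\<lambda>k. \<phi> (t k))"
    and sdp: "strongly_decreasing (\<lambda>k. \<phi> (t k) / t k)"
    using ds unfolding discretizing_seq_def by auto
  have tp: "\<And>k. t k > 0" using si_pos[OF si] .
  have u0: "u > 0" using tp[of k] u by linarith
  have pu: "\<phi> u > 0" by (rule ndq_pos[OF nd u0])
  have ptj: "\<phi> (t j) > 0" by (rule ndq_pos[OF nd tp])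
  show ?thesis
  proof (cases "j \<le> k")
    case True
    define n where "n = nat (k - j)"
    have kn: "k = j + int n" using True unfolding n_def by simp
    have "\<phi> u / u \<le> \<phi> (t k) / t k" by (rule ndq_anti[OF nd tp u(1)])
    also have "\<dots> \<le> (1/2) ^ n * (\<phi> (t j) / t j)"
      using sd_geo[OF sdp, where k=j and n=n] kn by simp
    finally have a: "\<phi> u / u \<le> (1/2) ^ n * (\<phi> (t j) / t j)" .
    have "t j * \<phi> u \<le> (1/2) ^ n * u * \<phi> (t j)"
      using a u0 tp[of j] by (simp add: field_simps)
    then have "(t j / u) / \<phi> (t j) \<le> (1/2) ^ n / \<phi> u"
      using u0 pu ptj by (simp add: field_simps)
    moreover have "min 1 (t j / u) / \<phi> (t j) \<le> (t j / u) / \<phi> (t j)"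
      using ptj by (intro divide_right_mono) auto
    moreover have "(1/2::real) ^ n / \<phi> u \<le> 2 * (1/2) ^ n / \<phi> u" using pu by (simp add: divide_right_mono)
    moreover have "nat \<bar>j - k\<bar> = n" unfolding n_def using True by simp
    ultimately show ?thesis by simp
  next
    case False
    define n where "n = nat (j - k - 1)"
    have jn: "j = (k + 1) + int n" using False unfolding n_def by simp
    have "2 ^ n * \<phi> u \<le> 2 ^ n * \<phi> (t (k+1))"
      using ndq_mono[OF nd u0 u(2)] by simp
    also have "\<dots> \<le> \<phi> (t j)" using si_geo[OF sip, where k="k+1" and n=n] jn by simp
    finally have a: "2 ^ n * \<phi> u \<le> \<phi> (t j)" .
    have "min 1 (t j / u) / \<phi> (t j) \<le> 1 / \<phi> (t j)"
      using ptj by (intro divide_right_mono) auto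
    also have "\<dots> \<le> 1 / (2 ^ n * \<phi> u)"
      using a pu ptj by (intro divide_left_mono) auto
    also have "\<dots> = 2 * (1/2) ^ Suc n / \<phi> u" by (simp add: field_simps)
    also have "Suc n = nat \<bar>j - k\<bar>" using False unfolding n_def by simp
    finally show ?thesis .
  qed
qed

lemma ptL:
  assumes nd: "nd_quasi_concave \<phi>" and ds: "discretizing_seq t \<phi>"
    and u: "t k \<le> u" "u \<le> t (k+1)"
  shows "1 / \<phi> u \<le> 2 * (min 1 (t k / u) / \<phi> (t k) + min 1 (t (k+1) / u) / \<phi> (t (k+1)))"
proof -
  have si: "strongly_increasing t" using ds unfolding discretizing_seq_def by auto
  obtain Z1 :: "int set" where Z: "\<And>k. (k \<in> Z1 \<longrightarrow> \<phi> (t (k + 1)) \<le> 2 * \<phi> (t k)) \<and>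
        (k \<notin> Z1 \<longrightarrow> \<phi> (t k) / t k \<le> 2 * (\<phi> (t (k + 1)) / t (k + 1)))"
    using ds unfolding discretizing_seq_def by blast
  have tp: "\<And>k. t k > 0" using si_pos[OF si] .
  have u0: "u > 0" using tp[of k] u by linarith
  have pu: "\<phi> u > 0" by (rule ndq_pos[OF nd u0])
  have p0: "\<phi> (t k) > 0" "\<phi> (t (k+1)) > 0" using ndq_pos[OF nd tp] by auto
  have m0: "min 1 (t k / u) = t k / u" using u u0 by (simp add: min_def field_simps)
  have m1: "min 1 (t (k+1) / u) = 1" using u u0 by (simp add: min_def field_simps)
  have nn: "0 \<le> t k / u / \<phi> (t k)" using tp[of k] u0 p0 by simp
  show ?thesis
  proof (cases "k \<in> Z1")
    case True
    then have "\<phi> (t (k + 1)) \<le> 2 * \<phi> (t k)" using Z by blast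
    also have "\<dots> \<le> 2 * \<phi> u" using ndq_mono[OF nd tp u(1)] by simp
    finally have "1 / \<phi> u \<le> 2 / \<phi> (t (k+1))" using pu p0 by (simp add: field_simps)
    then show ?thesis unfolding m0 m1 using nn by simp
  next
    case False
    then have "\<phi> (t k) / t k \<le> 2 * (\<phi> (t (k + 1)) / t (k + 1))" using Z by blast
    also have "\<dots> \<le> 2 * (\<phi> u / u)" using ndq_anti[OF nd u0 u(2)] by simp
    finally have "\<phi> (t k) / t k \<le> 2 * (\<phi> u / u)" .
    then have "1 / \<phi> u \<le> 2 * (t k / u / \<phi> (t k))"
      using pu p0 tp[of k] u0 by (simp add: field_simps)
    moreover have "0 \<le> 2 / \<phi> (t (k+1))" using p0 by simp
    ultimately have "1 / \<phi> u \<le> 2 * (t k / u / \<phi> (t k)) + 2 / \<phi> (t (k+1))" by linarith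
    then show ?thesis unfolding m0 m1 by (simp add: distrib_left)
  qed
qed



lemma K_nonneg:
  assumes q: "1 \<le> q" and t: "t > 0"
  shows "0 \<le> K_functional (weighted_lq_norm q w0) (weighted_lq_norm q w1) t a"
  unfolding K_functional_def
proof (rule Inf_greatest, clarify)
  fix x0 x1
  show "0 \<le> weighted_lq_norm q w0 x0 + ereal t * weighted_lq_norm q w1 x1"
    unfolding weighted_lq_norm_def using sn_nonneg[OF q] t by (simp add: add_nonneg_nonneg)
qed

lemma K_lower:
  assumes q: "1 \<le> q" and t: "t > 0" and w: "\<And>i. w0 i > 0" "\<And>i. w1 i > 0"
  shows "seq_norm q (\<lambda>i. a i * min (w0 i) (t * w1 i))
           \<le> 4 * K_functional (weighted_lq_norm q w0) (weighted_lq_norm q w1) t a"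
proof -
  let ?G = "seq_norm q (\<lambda>i. a i * min (w0 i) (t * w1 i))"
  have "ereal (1/4) * ?G \<le> K_functional (weighted_lq_norm q w0) (weighted_lq_norm q w1) t a"
    unfolding K_functional_def
  proof (rule Inf_greatest)
    fix e assume "e \<in> {weighted_lq_norm q w0 x0 + ereal t * weighted_lq_norm q w1 x1 | x0 x1.
         a = (\<lambda>i. x0 i + x1 i) \<and> weighted_lq_norm q w0 x0 < \<infinity> \<and> weighted_lq_norm q w1 x1 < \<infinity>}"
    then obtain x0 x1 where a: "a = (\<lambda>i. x0 i + x1 i)"
      and e: "e = weighted_lq_norm q w0 x0 + ereal t * weighted_lq_norm q w1 x1" by blast
    have pt: "\<bar>a i * min (w0 i) (t * w1 i)\<bar> \<le> \<bar>x0 i * w0 i\<bar> + \<bar>t * (x1 i * w1 i)\<bar>" for i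
    proof -
      have m: "0 < min (w0 i) (t * w1 i)" using w[of i] t by simp
      have "\<bar>a i * min (w0 i) (t * w1 i)\<bar> \<le> (\<bar>x0 i\<bar> + \<bar>x1 i\<bar>) * min (w0 i) (t * w1 i)"
        unfolding a using m by (simp add: abs_mult mult_right_mono abs_triangle_ineq)
      also have "\<dots> \<le> \<bar>x0 i\<bar> * w0 i + \<bar>x1 i\<bar> * (t * w1 i)"
        by (simp add: distrib_right add_mono mult_left_mono)
      finally show ?thesis using w[of i] t by (simp add: abs_mult mult_ac)
    qed
    have "?G \<le> 4 * (seq_norm q (\<lambda>i. x0 i * w0 i) + seq_norm q (\<lambda>i. t * (x1 i * w1 i)))"
      by (rule sn_tri[OF q pt])
    also have "seq_norm q (\<lambda>i. t * (x1 i * w1 i)) = ereal t * seq_norm q (\<lambda>i. x1 i * w1 i)"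
      by (rule sn_scale[OF q t])
    finally have "?G \<le> 4 * (weighted_lq_norm q w0 x0 + ereal t * weighted_lq_norm q w1 x1)"
      by (simp add: weighted_lq_norm_def)
    then have "ereal (1/4) * ?G \<le> ereal (1/4) * (4 * (weighted_lq_norm q w0 x0 + ereal t * weighted_lq_norm q w1 x1))"
      by (intro ereal_mult_left_mono) auto
    also have "\<dots> = weighted_lq_norm q w0 x0 + ereal t * weighted_lq_norm q w1 x1"
      by (simp add: mult.assoc[symmetric])
    finally show "ereal (1/4) * ?G \<le> e" unfolding e .
  qed
  then have "4 * (ereal (1/4) * ?G) \<le> 4 * K_functional (weighted_lq_norm q w0) (weighted_lq_norm q w1) t a"
    by (intro ereal_mult_left_mono) auto
  then show ?thesis by (simp add: mult.assoc[symmetric])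
qed

lemma K_upper:
  assumes q: "1 \<le> q" and t: "t > 0" and w: "\<And>i. w0 i > 0" "\<And>i. w1 i > 0"
    and G: "seq_norm q (\<lambda>i. a i * min (w0 i) (t * w1 i)) < \<infinity>"
  shows "in_sum_space (weighted_lq_norm q w0) (weighted_lq_norm q w1) a"
    and "K_functional (weighted_lq_norm q w0) (weighted_lq_norm q w1) t a
           \<le> 2 * seq_norm q (\<lambda>i. a i * min (w0 i) (t * w1 i))"
proof -
  let ?G = "seq_norm q (\<lambda>i. a i * min (w0 i) (t * w1 i))"
  define x0 where "x0 i = (if w0 i \<le> t * w1 i then a i else 0)" for i
  define x1 where "x1 i = (if w0 i \<le> t * w1 i then 0 else a i)" for i
  have a: "a = (\<lambda>i. x0 i + x1 i)" unfolding x0_def x1_def by auto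
  have n0: "weighted_lq_norm q w0 x0 \<le> ?G"
    unfolding weighted_lq_norm_def using w
    by (intro sn_mono[OF q]) (auto simp: x0_def abs_mult min_def)
  have "seq_norm q (\<lambda>i. t * (x1 i * w1 i)) \<le> ?G"
    using w t by (intro sn_mono[OF q]) (auto simp: x1_def abs_mult min_def)
  then have n1: "ereal t * weighted_lq_norm q w1 x1 \<le> ?G"
    unfolding weighted_lq_norm_def sn_scale[OF q t] .
  have f0: "weighted_lq_norm q w0 x0 < \<infinity>" using n0 G by (meson le_less_trans)
  have f1: "weighted_lq_norm q w1 x1 < \<infinity>"
  proof (rule ccontr)
    assume "\<not> weighted_lq_norm q w1 x1 < \<infinity>"
    then have "weighted_lq_norm q w1 x1 = \<infinity>" by simp
    then show False using n1 G t by simp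
  qed
  show "in_sum_space (weighted_lq_norm q w0) (weighted_lq_norm q w1) a"
    unfolding in_sum_space_def using a f0 f1 by blast
  have "K_functional (weighted_lq_norm q w0) (weighted_lq_norm q w1) t a
        \<le> weighted_lq_norm q w0 x0 + ereal t * weighted_lq_norm q w1 x1"
    unfolding K_functional_def using a f0 f1 by (intro Inf_lower) blast
  also have "\<dots> \<le> ?G + ?G" by (rule add_mono[OF n0 n1])
  also have "\<dots> = 2 * ?G" using mult_2_ereal[of ?G] by simp
  finally show "K_functional (weighted_lq_norm q w0) (weighted_lq_norm q w1) t a \<le> 2 * ?G" .
qed



lemma ereal_fin_nonneg:
  assumes "0 \<le> (x::ereal)" "x < \<infinity>"
  shows "x = ereal (real_of_ereal x)" "real_of_ereal x \<ge> 0"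
  using assms by (cases x; auto)+

lemma ediv1: "c > 0 \<Longrightarrow> ereal c * x \<le> ereal (c*y) \<Longrightarrow> x \<le> ereal y"
  by (cases x) auto

lemma ediv2: "c > 0 \<Longrightarrow> ereal (c*y) \<le> ereal c * x \<Longrightarrow> ereal y \<le> x"
  by (cases x) auto

lemma main_equiv:
  fixes W0 W1 u V t :: "int \<Rightarrow> real" and \<phi> :: "real \<Rightarrow> real" and M :: "int \<Rightarrow> int set"
    and p q :: ereal
  assumes p: "1 \<le> p" and q: "1 \<le> q" and nd: "nd_quasi_concave \<phi>" and ds: "discretizing_seq t \<phi>"
    and W0: "\<And>i. W0 i > 0" and W1: "\<And>i. W1 i > 0"
    and u: "\<And>i. u i = W0 i / W1 i" and V: "\<And>i. V i = W0 i / \<phi> (u i)"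
    and M: "\<And>k. M k = {i. t k \<le> u i \<and> u i \<le> t (k + 1)}"
  shows "equiv_spaces (interp_norm (weighted_lq_norm q W0) (weighted_lq_norm q W1) \<phi> p t)
                      (mixed_norm p q M V)"
proof -
  have ti: "strongly_increasing t" using ds unfolding discretizing_seq_def by auto
  have tp: "\<And>k. t k > 0" using si_pos[OF ti] .
  have up: "\<And>i. u i > 0" using W0 W1 u by simp
  have ptk: "\<And>k. \<phi> (t k) > 0" using ndq_pos[OF nd tp] .
  have pu: "\<And>i. \<phi> (u i) > 0" using ndq_pos[OF nd up] .
  have minw: "min (W0 i) (s * W1 i) = W0 i * min 1 (s / u i)" if "s > 0" for s i
  proof -
    have "s * W1 i = W0 i * (s / u i)" using W0[of i] W1[of i] u[of i] up[of i] by (simp add: field_simps)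
    then show ?thesis using W0[of i] by (simp add: min_mult_distrib_left)
  qed
  define kk where "kk i = (SOME k. t k \<le> u i \<and> u i < t (k+1))" for i
  have kk: "t (kk i) \<le> u i \<and> u i < t (kk i + 1)" for i
    unfolding kk_def by (rule someI_ex[OF si_block[OF ti up]])
  have kkM: "i \<in> M (kk i)" for i using kk[of i] M by auto
  define g where "g j a i = a i * W0 i * min 1 (t j / u i) / \<phi> (t j)" for j and a :: "int \<Rightarrow> real" and i
  define H where "H j a = seq_norm q (g j a)" for j a
  define Gf where "Gf j a = seq_norm q (\<lambda>i. a i * min (W0 i) (t j * W1 i))" for j a
  define Bk where "Bk k a = seq_norm q (\<lambda>i. if i \<in> M k then a i * V i else 0)" for k a
  define Kf where "Kf j a = K_functional (weighted_lq_norm q W0) (weighted_lq_norm q W1) (t j) a" for j a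
  have Hnn: "0 \<le> H j a" for j a unfolding H_def by (rule sn_nonneg[OF q])
  have Bnn: "0 \<le> Bk j a" for j a unfolding Bk_def by (rule sn_nonneg[OF q])
  have Knn: "0 \<le> Kf j a" for j a unfolding Kf_def by (rule K_nonneg[OF q tp])
  have GH: "Gf j a = ereal (\<phi> (t j)) * H j a" for j a
  proof -
    have "(\<lambda>i. a i * min (W0 i) (t j * W1 i)) = (\<lambda>i. \<phi> (t j) * g j a i)"
    proof
      fix i
      show "a i * min (W0 i) (t j * W1 i) = \<phi> (t j) * g j a i"
        using ptk[of j] unfolding minw[OF tp] g_def by (simp add: field_simps)
    qed
    then show ?thesis unfolding Gf_def H_def using sn_scale[OF q ptk] by simp
  qed
  have BH: "Bk k a \<le> 4 * (ereal 2 * H k a + ereal 2 * H (k+1) a)" for k a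
  proof -
    have pt: "\<bar>if i \<in> M k then a i * V i else 0\<bar> \<le> \<bar>2 * g k a i\<bar> + \<bar>2 * g (k+1) a i\<bar>" for i
    proof (cases "i \<in> M k")
      case False then show ?thesis by simp
    next
      case True
      then have ik: "t k \<le> u i" "u i \<le> t (k+1)" using M by auto
      have L: "1 / \<phi> (u i) \<le> 2 * (min 1 (t k / u i) / \<phi> (t k) + min 1 (t (k+1) / u i) / \<phi> (t (k+1)))"
        by (rule ptL[OF nd ds ik])
      have m0: "min 1 (t k / u i) \<ge> 0" "min 1 (t (k+1) / u i) \<ge> 0" using tp up by (auto intro: less_imp_le)
      have "\<bar>a i * V i\<bar> = \<bar>a i\<bar> * W0 i * (1 / \<phi> (u i))" using V W0[of i] pu[of i] by (simp add: abs_mult)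
      also have "\<dots> \<le> \<bar>a i\<bar> * W0 i * (2 * (min 1 (t k / u i) / \<phi> (t k) + min 1 (t (k+1) / u i) / \<phi> (t (k+1))))"
        by (intro mult_left_mono L) (use W0[of i] in auto)
      also have "\<dots> = \<bar>2 * g k a i\<bar> + \<bar>2 * g (k+1) a i\<bar>"
        using W0[of i] ptk[of k] ptk[of "k+1"] m0 by (simp add: g_def abs_mult field_simps)
      finally show ?thesis using True by simp
    qed
    have "Bk k a \<le> 4 * (seq_norm q (\<lambda>i. 2 * g k a i) + seq_norm q (\<lambda>i. 2 * g (k+1) a i))"
      unfolding Bk_def by (rule sn_tri[OF q pt])
    moreover have "seq_norm q (\<lambda>i. 2 * g k a i) = ereal 2 * H k a"
      unfolding H_def by (rule sn_scale[OF q]) simp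
    moreover have "seq_norm q (\<lambda>i. 2 * g (k+1) a i) = ereal 2 * H (k+1) a"
      unfolding H_def by (rule sn_scale[OF q]) simp
    ultimately show ?thesis by simp
  qed
  have HB: "H j a \<le> ereal 16 * (SUP k. ereal ((2/3) ^ nat \<bar>j-k\<bar>) * Bk k a)" for j a
  proof -
    define c where "c i = \<bar>a i\<bar> * V i" for i
    have Vp: "V i > 0" for i using V W0 pu by simp
    have cnn: "c i \<ge> 0" for i using Vp[of i] unfolding c_def by simp
    let ?n = "\<lambda>i. nat \<bar>j - kk i\<bar>"
    have pt: "\<bar>g j a i\<bar> \<le> \<bar>2 * ((2/3 * (3/4)) ^ ?n i * c i)\<bar>" for i
    proof -
      have U: "min 1 (t j / u i) / \<phi> (t j) \<le> 2 * (1/2) ^ ?n i / \<phi> (u i)"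
        by (rule ptU[OF nd ds]) (use kk[of i] in auto)
      have m0: "min 1 (t j / u i) \<ge> 0" using tp up by (auto intro: less_imp_le)
      have "\<bar>g j a i\<bar> = \<bar>a i\<bar> * W0 i * (min 1 (t j / u i) / \<phi> (t j))"
        using W0[of i] ptk[of j] m0 by (simp add: g_def abs_mult)
      also have "\<dots> \<le> \<bar>a i\<bar> * W0 i * (2 * (1/2) ^ ?n i / \<phi> (u i))"
        by (intro mult_left_mono U) (use W0[of i] in auto)
      also have "\<dots> = 2 * ((2/3 * (3/4)) ^ ?n i * c i)"
        by (simp add: c_def V field_simps)
      also have "\<dots> = \<bar>2 * ((2/3 * (3/4)) ^ ?n i * c i)\<bar>" using cnn[of i] by simp
      finally show ?thesis .
    qed
    let ?X = "seq_norm q (\<lambda>i. (2/3 * (3/4)) ^ ?n i * c i)"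
    let ?Y = "SUP k. ereal ((2/3) ^ nat \<bar>j-k\<bar>) * seq_norm q (\<lambda>i. if kk i = k then c i else 0)"
    let ?S = "SUP k. ereal ((2/3) ^ nat \<bar>j-k\<bar>) * Bk k a"
    have s1: "H j a \<le> ereal 2 * ?X"
    proof -
      have "H j a \<le> seq_norm q (\<lambda>i. 2 * ((2/3 * (3/4)) ^ ?n i * c i))"
        unfolding H_def by (rule sn_mono[OF q pt])
      also have "\<dots> = ereal 2 * ?X" by (rule sn_scale[OF q]) simp
      finally show ?thesis .
    qed
    have s2: "?X \<le> ereal 8 * ?Y"
    proof -
      have "?X \<le> ereal (2/(1-3/4)) * ?Y"
        by (rule conv_inner[OF q]) (auto simp: cnn)
      then show ?thesis by simp
    qed
    have s3: "?Y \<le> ?S"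
    proof (intro SUP_mono')
      fix k
      have "seq_norm q (\<lambda>i. if kk i = k then c i else 0) \<le> Bk k a"
        unfolding Bk_def
      proof (rule sn_mono[OF q])
        fix i
        show "\<bar>if kk i = k then c i else 0\<bar> \<le> \<bar>if i \<in> M k then a i * V i else 0\<bar>"
          using kkM[of i] Vp[of i] by (auto simp: c_def abs_mult)
      qed
      then show "ereal ((2/3) ^ nat \<bar>j-k\<bar>) * seq_norm q (\<lambda>i. if kk i = k then c i else 0)
                 \<le> ereal ((2/3) ^ nat \<bar>j-k\<bar>) * Bk k a"
        by (intro ereal_mult_left_mono) auto
    qed
    have "H j a \<le> ereal 2 * (ereal 8 * ?S)"
    proof -
      have "ereal 8 * ?Y \<le> ereal 8 * ?S" by (intro ereal_mult_left_mono s3) auto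
      then have "?X \<le> ereal 8 * ?S" using s2 by (meson order_trans)
      then have "ereal 2 * ?X \<le> ereal 2 * (ereal 8 * ?S)" by (intro ereal_mult_left_mono) auto
      then show ?thesis using s1 by (meson order_trans)
    qed
    then show ?thesis by (simp add: mult.assoc[symmetric])
  qed
  have dir1: "mixed_norm p q M V a < \<infinity> \<and> mixed_norm p q M V a \<le> ereal 256 * interp_norm (weighted_lq_norm q W0) (weighted_lq_norm q W1) \<phi> p t a"
    if I: "interp_norm (weighted_lq_norm q W0) (weighted_lq_norm q W1) \<phi> p t a < \<infinity>" for a
  proof -
    have sum: "in_sum_space (weighted_lq_norm q W0) (weighted_lq_norm q W1) a"
      using I unfolding interp_norm_def by (auto split: if_splits)
    define Kr where "Kr k = real_of_ereal (Kf k a) / \<phi> (t k)" for k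
    have Ieq: "interp_norm (weighted_lq_norm q W0) (weighted_lq_norm q W1) \<phi> p t a = seq_norm p Kr"
      using sum unfolding interp_norm_def Kr_def Kf_def by simp
    have Kfin: "Kf k a < \<infinity>" for k
    proof -
      obtain x0 x1 where x: "a = (\<lambda>i. x0 i + x1 i)" "weighted_lq_norm q W0 x0 < \<infinity>" "weighted_lq_norm q W1 x1 < \<infinity>"
        using sum unfolding in_sum_space_def by blast
      have "Kf k a \<le> weighted_lq_norm q W0 x0 + ereal (t k) * weighted_lq_norm q W1 x1"
        unfolding Kf_def K_functional_def using x by (intro Inf_lower) blast
      also have "\<dots> < \<infinity>"
      proof -
        have n: "0 \<le> weighted_lq_norm q W0 x0" "0 \<le> weighted_lq_norm q W1 x1"
          unfolding weighted_lq_norm_def using sn_nonneg[OF q] by auto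
        then show ?thesis using x(2,3)
          by (cases "weighted_lq_norm q W0 x0"; cases "weighted_lq_norm q W1 x1") auto
      qed
      finally show ?thesis .
    qed
    have Krn: "Kr k \<ge> 0" for k
      unfolding Kr_def using ereal_fin_nonneg(2)[OF Knn Kfin] ptk[of k] by simp
    have Kre: "Kf k a = ereal (\<phi> (t k) * Kr k)" for k
      unfolding Kr_def using ereal_fin_nonneg(1)[OF Knn Kfin] ptk[of k] by simp
    have Hb: "H k a \<le> ereal (4 * Kr k)" for k
    proof -
      have "ereal (\<phi> (t k)) * H k a = Gf k a" by (rule GH[symmetric])
      also have "\<dots> \<le> 4 * Kf k a" unfolding Gf_def Kf_def by (rule K_lower[OF q tp W0 W1])
      also have "\<dots> = ereal (\<phi> (t k) * (4 * Kr k))" unfolding Kre by simp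
      finally show ?thesis by (rule ediv1[OF ptk])
    qed
    define Hr where "Hr k = real_of_ereal (H k a)" for k
    have Hfin: "H k a < \<infinity>" for k by (rule le_less_trans[OF Hb]) simp
    have Hre: "H k a = ereal (Hr k)" "Hr k \<ge> 0" for k
      unfolding Hr_def using ereal_fin_nonneg[OF Hnn Hfin] by auto
    have HK: "Hr k \<le> 4 * Kr k" for k using Hb[of k] Hre[of k] by simp
    have Bb: "Bk k a \<le> ereal (8 * (Hr k + Hr (k+1)))" for k
      using BH[of k a] unfolding Hre by simp
    have Bfin: "Bk k a < \<infinity>" for k by (rule le_less_trans[OF Bb]) simp
    define Br where "Br k = real_of_ereal (Bk k a)" for k
    have Bre: "Bk k a = ereal (Br k)" "Br k \<ge> 0" for k
      unfolding Br_def using ereal_fin_nonneg[OF Bnn Bfin] by auto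
    have Xeq: "mixed_norm p q M V a = seq_norm p Br"
      using Bfin unfolding mixed_norm_def Let_def Br_def Bk_def by simp
    have BK: "\<bar>Br k\<bar> \<le> \<bar>32 * Kr k\<bar> + \<bar>32 * Kr (k+1)\<bar>" for k
    proof -
      have "Br k \<le> 8 * (Hr k + Hr (k+1))" using Bb[of k] Bre[of k] by simp
      then show ?thesis using HK[of k] HK[of "k+1"] Bre(2)[of k] Krn[of k] Krn[of "k+1"] by simp
    qed
    have "seq_norm p Br \<le> 4 * (seq_norm p (\<lambda>k. 32 * Kr k) + seq_norm p (\<lambda>k. 32 * Kr (k+1)))"
      by (rule sn_tri[OF p BK])
    also have "seq_norm p (\<lambda>k. 32 * Kr (k+1)) = seq_norm p (\<lambda>k. 32 * Kr k)"
      using sn_shift[OF p, of "\<lambda>k. 32 * Kr k" 1] by simp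
    also have "seq_norm p (\<lambda>k. 32 * Kr k) = ereal 32 * seq_norm p Kr"
      by (rule sn_scale[OF p]) simp
    finally have X: "seq_norm p Br \<le> 4 * (ereal 32 * seq_norm p Kr + ereal 32 * seq_norm p Kr)" .
    obtain r where r: "seq_norm p Kr = ereal r" "r \<ge> 0"
      using I Ieq sn_nonneg[OF p, of Kr] by (cases "seq_norm p Kr") auto
    have m: "mixed_norm p q M V a \<le> ereal (256 * r)" using X r Xeq by simp
    then have "mixed_norm p q M V a < \<infinity>" by (rule le_less_trans) simp
    then show ?thesis using Ieq r m by simp
  qed
  have dir2: "interp_norm (weighted_lq_norm q W0) (weighted_lq_norm q W1) \<phi> p t a < \<infinity> \<and> interp_norm (weighted_lq_norm q W0) (weighted_lq_norm q W1) \<phi> p t a \<le> ereal 256 * mixed_norm p q M V a"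
    if X: "mixed_norm p q M V a < \<infinity>" for a
  proof -
    have Bfin: "Bk k a < \<infinity>" for k
    proof (rule ccontr)
      assume "\<not> Bk k a < \<infinity>"
      then have "mixed_norm p q M V a = \<infinity>"
        unfolding mixed_norm_def Let_def Bk_def by auto
      then show False using X by simp
    qed
    define Br where "Br k = real_of_ereal (Bk k a)" for k
    have Bre: "Bk k a = ereal (Br k)" "Br k \<ge> 0" for k
      unfolding Br_def using ereal_fin_nonneg[OF Bnn Bfin] by auto
    have Xeq: "mixed_norm p q M V a = seq_norm p Br"
      using Bfin unfolding mixed_norm_def Let_def Br_def Bk_def by simp
    obtain m where m: "seq_norm p Br = ereal m" "m \<ge> 0"
      using X Xeq sn_nonneg[OF p, of Br] by (cases "seq_norm p Br") auto
    let ?S = "\<lambda>j. SUP k. ereal ((2/3) ^ nat \<bar>j-k\<bar>) * Bk k a"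
    have Seq: "?S j = (SUP k. ereal ((2/3) ^ nat \<bar>j-k\<bar> * Br k))" for j
      unfolding Bre by simp
    have Sb: "?S j \<le> ereal m" for j
      unfolding Seq
    proof (rule SUP_least)
      fix k
      have "(2/3::real) ^ nat \<bar>j-k\<bar> * Br k \<le> Br k"
        using Bre(2)[of k] by (intro mult_left_le_one_le) (auto intro: power_le_one)
      then have "ereal ((2/3) ^ nat \<bar>j-k\<bar> * Br k) \<le> ereal \<bar>Br k\<bar>" using Bre(2)[of k] by simp
      also have "\<dots> \<le> seq_norm p Br" by (rule sn_point[OF p])
      finally show "ereal ((2/3) ^ nat \<bar>j-k\<bar> * Br k) \<le> ereal m" using m by simp
    qed
    have Hb: "H j a \<le> ereal (16 * m)" for j
    proof -
      have "H j a \<le> ereal 16 * ?S j" by (rule HB)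
      also have "\<dots> \<le> ereal 16 * ereal m" by (intro ereal_mult_left_mono Sb) auto
      finally show ?thesis by simp
    qed
    have Hfin: "H k a < \<infinity>" for k by (rule le_less_trans[OF Hb]) simp
    define Hr where "Hr k = real_of_ereal (H k a)" for k
    have Hre: "H k a = ereal (Hr k)" "Hr k \<ge> 0" for k
      unfolding Hr_def using ereal_fin_nonneg[OF Hnn Hfin] by auto
    have G0: "Gf 0 a < \<infinity>" unfolding GH Hre by simp
    have sum: "in_sum_space (weighted_lq_norm q W0) (weighted_lq_norm q W1) a"
      by (rule K_upper(1)[OF q tp W0 W1 G0[unfolded Gf_def]])
    have Kb: "Kf j a \<le> ereal (\<phi> (t j) * (2 * Hr j))" for j
    proof -
      have "Kf j a \<le> 2 * Gf j a"
        unfolding Kf_def Gf_def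
        by (rule K_upper(2)[OF q tp W0 W1]) (use Hfin GH Hre in \<open>simp add: Gf_def\<close>)
      also have "\<dots> = ereal (\<phi> (t j) * (2 * Hr j))" unfolding GH Hre by simp
      finally show ?thesis .
    qed
    define Kr where "Kr k = real_of_ereal (Kf k a) / \<phi> (t k)" for k
    have Ieq: "interp_norm (weighted_lq_norm q W0) (weighted_lq_norm q W1) \<phi> p t a = seq_norm p Kr"
      using sum unfolding interp_norm_def Kr_def Kf_def by simp
    have KH: "\<bar>Kr j\<bar> \<le> \<bar>2 * Hr j\<bar>" for j
    proof -
      have Kfin: "Kf j a < \<infinity>" by (rule le_less_trans[OF Kb]) simp
      have e: "Kf j a = ereal (real_of_ereal (Kf j a))" and n: "real_of_ereal (Kf j a) \<ge> 0"
        using ereal_fin_nonneg[OF Knn Kfin] by auto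
      have "real_of_ereal (Kf j a) \<le> \<phi> (t j) * (2 * Hr j)"
        using Kb[of j] e by (metis ereal_less_eq(3))
      note this n
      then have "Kr j \<le> 2 * Hr j" unfolding Kr_def using ptk[of j]
        by (simp add: pos_divide_le_eq mult.commute mult.left_commute)
      moreover have "Kr j \<ge> 0" unfolding Kr_def using ptk[of j] n by simp
      ultimately show ?thesis by simp
    qed
    define D where "D j = Hr j / 16" for j
    have Dle: "ereal (D j) \<le> (SUP k. ereal ((2/3) ^ nat \<bar>j-k\<bar> * Br k))" for j
    proof -
      have "ereal (16 * D j) \<le> ereal 16 * ?S j" unfolding D_def using HB[of j a] Hre by simp
      then show ?thesis unfolding Seq by (rule ediv2[rotated]) simp
    qed
    have "seq_norm p D \<le> ereal (2/(1-2/3)) * seq_norm p Br"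
      by (rule conv_outer[OF p _ _ Bre(2) _ Dle]) (auto simp: D_def Hre)
    then have D6: "seq_norm p D \<le> ereal (6 * m)" using m by simp
    have "seq_norm p Kr \<le> seq_norm p (\<lambda>j. 2 * Hr j)" by (rule sn_mono[OF p KH])
    also have "\<dots> = ereal 2 * seq_norm p Hr" by (rule sn_scale[OF p]) simp
    also have "seq_norm p Hr = seq_norm p (\<lambda>j. 16 * D j)" unfolding D_def by simp
    also have "\<dots> = ereal 16 * seq_norm p D" by (rule sn_scale[OF p]) simp
    finally have "seq_norm p Kr \<le> ereal 2 * (ereal 16 * seq_norm p D)" .
    also have "\<dots> \<le> ereal 2 * (ereal 16 * ereal (6 * m))"
      by (intro ereal_mult_left_mono D6) auto
    finally have Ib: "seq_norm p Kr \<le> ereal (192 * m)" by simp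
    have "ereal (192 * m) \<le> ereal 256 * mixed_norm p q M V a" using Xeq m by simp
    then have "seq_norm p Kr \<le> ereal 256 * mixed_norm p q M V a" using Ib by (meson order_trans)
    moreover have "seq_norm p Kr < \<infinity>" by (rule le_less_trans[OF Ib]) simp
    ultimately show ?thesis using Ieq by simp
  qed
  let ?I = "interp_norm (weighted_lq_norm q W0) (weighted_lq_norm q W1) \<phi> p t"
  let ?X = "mixed_norm p q M V"
  have A: "\<forall>a. ?I a < \<infinity> \<longleftrightarrow> ?X a < \<infinity>" using dir1 dir2 by blast
  have B: "\<forall>a. ?I a < \<infinity> \<longrightarrow> ?I a \<le> ereal 256 * ?X a \<and> ?X a \<le> ereal 256 * ?I a"
    using dir1 dir2 by blast
  show ?thesis unfolding equiv_spaces_def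
    using A B by (intro conjI exI[of _ 256]) auto
qed



theorem corollary3p4:
  fixes p q :: ereal and \<phi>0 \<phi>1 \<phi> :: "real \<Rightarrow> real" and tt t :: "int \<Rightarrow> real"
  assumes "1 \<le> p" and "1 \<le> q"
    and "nd_quasi_concave \<phi>0" and "nd_quasi_concave \<phi>1" and "nd_quasi_concave \<phi>"
    and "discretizing_seq tt (comp_qc \<phi> \<phi>0 \<phi>1)"
    and "discretizing_seq t \<phi>"
  shows "equiv_spaces
     (interp_norm (weighted_lq_norm q (\<lambda>i. 1 / \<phi>0 (tt i)))
                  (weighted_lq_norm q (\<lambda>i. 1 / \<phi>1 (tt i))) \<phi> p t)
     (mixed_norm p q (\<lambda>k. {i. t k \<le> \<phi>1 (tt i) / \<phi>0 (tt i) \<and> \<phi>1 (tt i) / \<phi>0 (tt i) \<le> t (k + 1)})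
                 (\<lambda>i. 1 / comp_qc \<phi> \<phi>0 \<phi>1 (tt i)))"
proof -
  have sit: "strongly_increasing tt" using assms(6) unfolding discretizing_seq_def by auto
  have ttp: "tt i > 0" for i by (rule si_pos[OF sit])
  have p0: "\<phi>0 (tt i) > 0" for i by (rule ndq_pos[OF assms(3) ttp])
  have p1: "\<phi>1 (tt i) > 0" for i by (rule ndq_pos[OF assms(4) ttp])
  show ?thesis
  proof (rule main_equiv[OF assms(1,2,5,7)])
    fix i
    show "1 / \<phi>0 (tt i) > 0" using p0[of i] by simp
    show "1 / \<phi>1 (tt i) > 0" using p1[of i] by simp
    show "\<phi>1 (tt i) / \<phi>0 (tt i) = (1 / \<phi>0 (tt i)) / (1 / \<phi>1 (tt i))"
      using p0[of i] p1[of i] by (simp add: field_simps)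
    show "1 / comp_qc \<phi> \<phi>0 \<phi>1 (tt i) = (1 / \<phi>0 (tt i)) / \<phi> (\<phi>1 (tt i) / \<phi>0 (tt i))"
      by (simp add: comp_qc_def)
  next
    fix k
    show "{i. t k \<le> \<phi>1 (tt i) / \<phi>0 (tt i) \<and> \<phi>1 (tt i) / \<phi>0 (tt i) \<le> t (k + 1)} =
          {i. t k \<le> \<phi>1 (tt i) / \<phi>0 (tt i) \<and> \<phi>1 (tt i) / \<phi>0 (tt i) \<le> t (k + 1)}" ..
  qed
qed


end
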